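(* Let $E\in M_n(\mathbb{FT})$ be an idempotent of rank $n$, let $A$ be in the $\mathcal H$-class of $E$ in $M_n(\mathbb{FT})$, and let $\phi_A:\mathbb{R}^n\to\mathbb{R}^n$ be $x\mapsto A\otimes x$. Regarding $C(E)$ as a subset of $\mathbb{R}^n$ with the usual topology: (i) $\phi_A$ maps interior points of $C(E)$ to interior points of $C(E)$; (ii) $\phi_A$ maps boundary points of $C(E)$ to boundary points of $C(E)$; (iii) $\phi_A$ maps every point not in $C(E)$ to a boundary point of $C(E)$. Dually, right multiplication $x\mapsto x\otimes A$ (for row vectors $x$) induces an $\mathbb{FT}$-module automorphism of $R(E)$ mapping interior points of $R(E)$ to interior points and boundary points to boundary points.
   Context: $\mathbb{FT}$ is $\mathbb{R}$ with $a\oplus b=\max(a,b)$, $a\otimes b=a+b$; $M_n(\mathbb{FT})$ is the semigroup of real $n\times n$ matrices under $(A\otimes B)_{i,j}=\max_k(A_{i,k}+B_{k,j})$, acting on column vectors by $(A\otimes x)_i=\max_k(A_{i,k}+x_k)$ and on row vectors by $(x\otimes A)_j=\max_k(x_k+A_{k,j})$. $C(E)$ (resp. $R(E)$) is the set of finite componentwise maxima of columns (resp. rows) of $E$ shifted by real constants; these are $\mathbb{FT}$-modules under componentwise max and adding constants. The rank of an idempotent $E$ is the minimal cardinality of a generating set of $C(E)$. Green's relations: $a\,\mathcal{R}\,b$ iff $aS^1=bS^1$, $a\,\mathcal{L}\,b$ iff $S^1a=S^1b$, $\mathcal{H}=\mathcal{L}\cap\mathcal{R}$. *)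

theory Defs
  imports "HOL-Analysis.Analysis"
begin

text \<open>Max-plus (tropical) matrices of size n x n are modelled as real^'n^'n
  with a finite index type 'n (so n = CARD('n)); vectors as real^'n.\<close>

definition tmult :: "real^'n::finite^'n \<Rightarrow> real^'n^'n \<Rightarrow> real^'n^'n" where
  "tmult A B = (\<chi> i j. Max (range (\<lambda>k. A$i$k + B$k$j)))"

definition tmv :: "real^'n::finite^'n \<Rightarrow> real^'n \<Rightarrow> real^'n" where
  "tmv A x = (\<chi> i. Max (range (\<lambda>k. A$i$k + x$k)))"

definition tvm :: "real^'n::finite \<Rightarrow> real^'n^'n \<Rightarrow> real^'n" where
  "tvm x A = (\<chi> j. Max (range (\<lambda>k. x$k + A$k$j)))"

definition tidempotent :: "real^'n::finite^'n \<Rightarrow> bool" where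
  "tidempotent E \<longleftrightarrow> tmult E E = E"

definition vmax :: "real^'n::finite \<Rightarrow> real^'n \<Rightarrow> real^'n" where
  "vmax x y = (\<chi> i. max (x$i) (y$i))"

definition vshift :: "real \<Rightarrow> real^'n::finite \<Rightarrow> real^'n" where
  "vshift c x = (\<chi> i. c + x$i)"

definition tspan :: "(real^'n::finite) set \<Rightarrow> (real^'n) set" where
  "tspan G = {x. \<exists>S c. finite S \<and> S \<noteq> {} \<and> S \<subseteq> G \<and>
      x = (\<chi> i. Max ((\<lambda>g. c g + g$i) ` S))}"

definition col :: "real^'n::finite^'n \<Rightarrow> 'n \<Rightarrow> real^'n" where
  "col E j = (\<chi> i. E$i$j)"

definition row :: "real^'n::finite^'n \<Rightarrow> 'n \<Rightarrow> real^'n" where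
  "row E i = (\<chi> j. E$i$j)"

definition colspace :: "real^'n::finite^'n \<Rightarrow> (real^'n) set" where
  "colspace E = tspan (range (col E))"

definition rowspace :: "real^'n::finite^'n \<Rightarrow> (real^'n) set" where
  "rowspace E = tspan (range (row E))"

definition trank :: "real^'n::finite^'n \<Rightarrow> nat" where
  "trank E = (LEAST k. \<exists>G. finite G \<and> card G = k \<and> G \<subseteq> colspace E \<and> tspan G = colspace E)"

text \<open>Green's relations in the semigroup (M_n(FT), tmult); S^1 adds an identity.\<close>
definition greenR :: "real^'n::finite^'n \<Rightarrow> real^'n^'n \<Rightarrow> bool" where
  "greenR a b \<longleftrightarrow> insert a (range (tmult a)) = insert b (range (tmult b))"

definition greenL :: "real^'n::finite^'n \<Rightarrow> real^'n^'n \<Rightarrow> bool" where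
  "greenL a b \<longleftrightarrow> insert a (range (\<lambda>s. tmult s a)) = insert b (range (\<lambda>s. tmult s b))"

definition greenH :: "real^'n::finite^'n \<Rightarrow> real^'n^'n \<Rightarrow> bool" where
  "greenH a b \<longleftrightarrow> greenL a b \<and> greenR a b"

definition ft_module_automorphism :: "(real^'n::finite \<Rightarrow> real^'n) \<Rightarrow> (real^'n) set \<Rightarrow> bool" where
  "ft_module_automorphism f M \<longleftrightarrow> bij_betw f M M \<and>
     (\<forall>x\<in>M. \<forall>y\<in>M. f (vmax x y) = vmax (f x) (f y)) \<and>
     (\<forall>c. \<forall>x\<in>M. f (vshift c x) = vshift c (f x))"

end

theory Submission
  imports Defs "HOL-Homology.Invariance_of_Domain"
begin

lemma Mr_le: "Max (range (f::'a::finite\<Rightarrow>real)) \<le> c \<longleftrightarrow> (\<forall>k. f k \<le> c)"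
  by (simp add: Max_le_iff)
lemma Mr_le2: "a + Max (range (f::'a::finite\<Rightarrow>real)) \<le> c \<longleftrightarrow> (\<forall>k. a + f k \<le> c)"
  using Mr_le[of f "c - a"] by (auto simp: algebra_simps)
lemma Mr_le3: "Max (range (f::'a::finite\<Rightarrow>real)) + a \<le> c \<longleftrightarrow> (\<forall>k. f k + a \<le> c)"
  using Mr_le[of f "c - a"] by (auto simp: algebra_simps)
lemma Mr_ge: "f k \<le> Max (range (f::'a::finite\<Rightarrow>real))"
  by simp
lemma Mr_ex: "\<exists>k. Max (range (f::'a::finite\<Rightarrow>real)) = f k"
proof -
  have "Max (range f) \<in> range f" by (rule Max_in) auto
  then show ?thesis by (metis rangeE)
qed
lemma eq_by_le: "(\<And>c. (a::real) \<le> c \<longleftrightarrow> b \<le> c) \<Longrightarrow> a = b"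
  by (meson order_antisym order_refl)

lemma tmv_assoc: "tmv A (tmv B x) = tmv (tmult A B) x"
  unfolding vec_eq_iff
  by (auto intro!: eq_by_le simp: tmv_def tmult_def Mr_le Mr_le2 Mr_le3 add.assoc)

lemma tmult_assoc: "tmult A (tmult B C) = tmult (tmult A B) C"
  unfolding vec_eq_iff
  by (auto intro!: eq_by_le simp: tmult_def Mr_le Mr_le2 Mr_le3 add.assoc)

lemma cont_Max:
  assumes "finite K" "K \<noteq> {}" "\<And>k. k \<in> K \<Longrightarrow> continuous_on S (f k)"
  shows "continuous_on S (\<lambda>x. Max ((\<lambda>k. f k x :: real) ` K))"
  using assms
proof (induction K rule: finite_ne_induct)
  case (singleton x) then show ?case by simp
next
  case (insert k F)
  have "(\<lambda>x. Max ((\<lambda>k. f k x) ` insert k F)) = (\<lambda>x. max (f k x) (Max ((\<lambda>k. f k x) ` F)))"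
    using insert by (auto simp: Max_insert)
  then show ?case using insert by (auto intro!: continuous_on_max)
qed

lemma tmv_cont: "continuous_on S (tmv A)"
  unfolding tmv_def
  by (intro continuous_on_vec_lambda cont_Max) (auto intro!: continuous_intros)

lemma fix_closed: "closed {x. tmv E x = x}"
  by (intro closed_Collect_eq tmv_cont continuous_on_id)

lemma Mset_le: "finite K \<Longrightarrow> K \<noteq> {} \<Longrightarrow> Max (h ` K) \<le> (t::real) \<longleftrightarrow> (\<forall>k\<in>K. h k \<le> t)"
  by (simp add: Max_le_iff)

lemma idem_eq: assumes "tmult E E = E" shows "E$i$j = Max (range (\<lambda>k. E$i$k + E$k$j))"
proof -
  have "E$i$j = tmult E E $ i $ j" using assms by simp
  then show ?thesis by (simp add: tmult_def)
qed

lemma idem_ge: assumes "tmult E E = E" shows "E$i$k + E$k$j \<le> E$i$j"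
proof -
  have "E$i$k + E$k$j \<le> Max (range (\<lambda>k. E$i$k + E$k$j))" by (rule Mr_ge)
  then show ?thesis using idem_eq[OF assms, of i j] by simp
qed

lemma tmv_nth: "tmv A x $ i = Max (range (\<lambda>k. A$i$k + x$k))"
  by (simp add: tmv_def)

lemma tspan_mono: "G \<subseteq> H \<Longrightarrow> tspan G \<subseteq> tspan H"
  unfolding tspan_def by (intro Collect_mono impI) (elim exE conjE, blast)

lemma colspace_sub: 
  assumes idem: "tmult E E = E" and x: "x \<in> colspace E"
  shows "tmv E x = x"
proof -
  have "\<exists>S c. finite S \<and> S \<noteq> {} \<and> S \<subseteq> range (col E) \<and>
      x = (\<chi> i. Max ((\<lambda>g. c g + g$i) ` S))"
    using x unfolding colspace_def tspan_def mem_Collect_eq .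
  then obtain S c where S: "finite S" "S \<noteq> {}" "S \<subseteq> range (col E)"
    and xd: "x = (\<chi> i. Max ((\<lambda>g. c g + g$i) ` S))"
    by blast
  have xi: "x$i = Max ((\<lambda>g. c g + g$i) ` S)" for i using xd by simp
  have gcol: "g$i = Max (range (\<lambda>k. E$i$k + g$k))" if gS: "g \<in> S" for g i
  proof -
    obtain j where "g = col E j" using S(3) gS by blast
    then show ?thesis using idem_eq[OF idem, of i j] by (simp add: col_def)
  qed
  show ?thesis unfolding vec_eq_iff
  proof
    fix i
    show "tmv E x $ i = x $ i"
    proof (rule eq_by_le)
      fix t
      have "tmv E x $ i \<le> t \<longleftrightarrow> (\<forall>k. \<forall>g\<in>S. E$i$k + (c g + g$k) \<le> t)"
      proof -
        have "E$i$k + x$k \<le> t \<longleftrightarrow> (\<forall>g\<in>S. E$i$k + (c g + g$k) \<le> t)" for k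
        proof -
          have "E$i$k + x$k \<le> t \<longleftrightarrow> x$k \<le> t - E$i$k" by auto
          also have "\<dots> \<longleftrightarrow> (\<forall>g\<in>S. c g + g$k \<le> t - E$i$k)"
            unfolding xi by (rule Mset_le[OF S(1) S(2)])
          also have "\<dots> \<longleftrightarrow> (\<forall>g\<in>S. E$i$k + (c g + g$k) \<le> t)"
            by (intro ball_cong refl) linarith
          finally show ?thesis .
        qed
        then show ?thesis unfolding tmv_nth Mr_le by blast
      qed
      also have "\<dots> \<longleftrightarrow> (\<forall>g\<in>S. c g + g$i \<le> t)"
      proof -
        have "c g + g$i \<le> t \<longleftrightarrow> (\<forall>k. E$i$k + (c g + g$k) \<le> t)" if "g \<in> S" for g
          using gcol[OF that, of i] Mr_le2[of "c g" "\<lambda>k. E$i$k + g$k" t]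
          by (simp add: algebra_simps)
        then show ?thesis by blast
      qed
      also have "\<dots> \<longleftrightarrow> x$i \<le> t" unfolding xi using S by (simp add: Max_le_iff)
      finally show "tmv E x $ i \<le> t \<longleftrightarrow> x $ i \<le> t" .
    qed
  qed
qed

lemma col_nth: "col E j $ r = E$r$j" by (simp add: col_def)

lemma in_tspan_cols:
  fixes x :: "real^'n::finite" and E :: "real^'n^'n"
  assumes J: "J \<noteq> {}" and xr: "\<And>r. x$r = Max ((\<lambda>j. E$r$j + x$j) ` J)"
  shows "x \<in> tspan (col E ` J)"
proof -
  define c where "c g = Max ((\<lambda>j. x$j) ` {j\<in>J. col E j = g})" for g
  have fJ: "finite J" by simp
  have ne: "{j\<in>J. col E j = g} \<noteq> {}" if "g \<in> col E ` J" for g using that by blast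
  have "x = (\<chi> r. Max ((\<lambda>g. c g + g$r) ` (col E ` J)))"
    unfolding vec_eq_iff
  proof
    fix r
    show "x $ r = (\<chi> r. Max ((\<lambda>g. c g + g$r) ` (col E ` J))) $ r"
    proof (simp, rule eq_by_le)
      fix t
      have "Max ((\<lambda>g. c g + g$r) ` (col E ` J)) \<le> t \<longleftrightarrow> (\<forall>g\<in>col E ` J. c g + g$r \<le> t)"
        by (rule Mset_le) (use J in auto)
      also have "\<dots> \<longleftrightarrow> (\<forall>g\<in>col E ` J. c g \<le> t - g$r)" by auto
      also have "\<dots> \<longleftrightarrow> (\<forall>g\<in>col E ` J. \<forall>j\<in>{j\<in>J. col E j = g}. x$j \<le> t - g$r)"
      proof -
        have "c g \<le> t - g$r \<longleftrightarrow> (\<forall>j\<in>{j\<in>J. col E j = g}. x$j \<le> t - g$r)" if "g \<in> col E ` J" for g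
          unfolding c_def by (rule Mset_le) (use ne[OF that] in auto)
        then show ?thesis by blast
      qed
      also have "\<dots> \<longleftrightarrow> (\<forall>j\<in>J. E$r$j + x$j \<le> t)"
      proof
        assume H: "\<forall>g\<in>col E ` J. \<forall>j\<in>{j\<in>J. col E j = g}. x$j \<le> t - g$r"
        show "\<forall>j\<in>J. E$r$j + x$j \<le> t"
        proof
          fix j assume j: "j \<in> J"
          then have "x$j \<le> t - col E j $ r" using H by blast
          then show "E$r$j + x$j \<le> t" by (simp add: col_nth)
        qed
      next
        assume H: "\<forall>j\<in>J. E$r$j + x$j \<le> t"
        show "\<forall>g\<in>col E ` J. \<forall>j\<in>{j\<in>J. col E j = g}. x$j \<le> t - g$r"
        proof (intro ballI)
          fix g j assume "g \<in> col E ` J" "j \<in> {j\<in>J. col E j = g}"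
          then have j: "j \<in> J" and g: "g = col E j" by auto
          have "E$r$j + x$j \<le> t" using H j by blast
          then show "x$j \<le> t - g$r" unfolding g col_nth by linarith
        qed
      qed
      also have "\<dots> \<longleftrightarrow> x$r \<le> t" unfolding xr[of r] by (rule Mset_le[symmetric]) (use J in auto)
      finally show "x$r \<le> t \<longleftrightarrow> Max ((\<lambda>g. c g + g$r) ` (col E ` J)) \<le> t" by blast
    qed
  qed
  then have xeq: "x = (\<chi> r. Max ((\<lambda>g. c g + g$r) ` (col E ` J)))" .
  have P: "finite (col E ` J) \<and> col E ` J \<noteq> {} \<and> col E ` J \<subseteq> col E ` J \<and>
      x = (\<chi> r. Max ((\<lambda>g. c g + g$r) ` (col E ` J)))"
  proof -
    have "finite (col E ` J)" by (rule finite_imageI) (rule finite)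
    then show ?thesis using J xeq by blast
  qed
  show ?thesis unfolding tspan_def mem_Collect_eq
    by (rule exI[where x="col E ` J"], rule exI[where x=c], rule P)
qed



lemma colspace_fix:
  assumes idem: "tmult E E = E"
  shows "colspace E = {x. tmv E x = x}"
proof
  show "colspace E \<subseteq> {x. tmv E x = x}"
  proof
    fix x assume "x \<in> colspace E"
    then have "tmv E x = x" by (rule colspace_sub[OF idem])
    then show "x \<in> {x. tmv E x = x}" by (rule CollectI)
  qed
  show "{x. tmv E x = x} \<subseteq> colspace E"
  proof
    fix x assume "x \<in> {x. tmv E x = x}"
    then have fx: "tmv E x = x" by (rule CollectD)
    have xr: "x$r = Max ((\<lambda>j. E$r$j + x$j) ` UNIV)" for r
    proof -
      have "x$r = tmv E x $ r" using fx by simp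
      also have "\<dots> = Max ((\<lambda>j. E$r$j + x$j) ` UNIV)" by (rule tmv_nth)
      finally show ?thesis .
    qed
    have "x \<in> tspan (col E ` UNIV)" by (rule in_tspan_cols[OF _ xr]) simp
    then show "x \<in> colspace E" unfolding colspace_def .
  qed
qed

lemma diag_zero:
  fixes E :: "real^'n::finite^'n"
  assumes idem: "tmult E E = E" and rk: "trank E = CARD('n)"
  shows "E$i$i = 0"
proof (rule ccontr)
  assume ne0: "E$i$i \<noteq> 0"
  obtain m where mm: "Max (range (\<lambda>k. E$i$k + E$k$i)) = E$i$m + E$m$i"
    using Mr_ex[of "\<lambda>k. E$i$k + E$k$i"] by blast
  have m: "E$i$i = E$i$m + E$m$i" using idem_eq[OF idem, of i i] mm by (rule trans)
  have mi: "m \<noteq> i" using m ne0 by auto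
  have le0: "E$i$i < 0" using idem_ge[OF idem, of i i i] ne0 by auto
  define J where "J = UNIV - {i}"
  have J: "J \<noteq> {}" using mi J_def by blast
  have "colspace E \<subseteq> tspan (col E ` J)"
  proof
    fix x assume "x \<in> colspace E"
    then have fx: "tmv E x = x" using colspace_fix[OF idem] by blast
    have xr: "x$r = Max ((\<lambda>j. E$r$j + x$j) ` UNIV)" for r
    proof -
      have "x$r = tmv E x $ r" using fx by simp
      also have "\<dots> = Max ((\<lambda>j. E$r$j + x$j) ` UNIV)" by (rule tmv_nth)
      finally show ?thesis .
    qed
    show "x \<in> tspan (col E ` J)"
    proof (rule in_tspan_cols[OF J])
      fix r
      show "x$r = Max ((\<lambda>j. E$r$j + x$j) ` J)"
      proof (rule eq_by_le)
        fix t
        have "x$r \<le> t \<longleftrightarrow> (\<forall>j. E$r$j + x$j \<le> t)" unfolding xr[of r] by (rule Mr_le)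
        also have "\<dots> \<longleftrightarrow> (\<forall>j\<in>J. E$r$j + x$j \<le> t)"
        proof
          assume H: "\<forall>j\<in>J. E$r$j + x$j \<le> t"
          obtain q where qq: "Max (range (\<lambda>k. E$i$k + x$k)) = E$i$q + x$q"
            using Mr_ex[of "\<lambda>k. E$i$k + x$k"] by blast
          have q: "x$i = E$i$q + x$q" using xr[of i] qq by (rule trans)
          have qi: "q \<noteq> i" using q le0 by auto
          have "E$r$i + x$i \<le> E$r$q + x$q" using q idem_ge[OF idem, of r i q] by auto
          also have "\<dots> \<le> t" using H qi J_def by auto
          finally have "E$r$i + x$i \<le> t" .
          then show "\<forall>j. E$r$j + x$j \<le> t" using H J_def by (metis DiffI UNIV_I singletonD)
        qed (auto)
        also have "\<dots> \<longleftrightarrow> Max ((\<lambda>j. E$r$j + x$j) ` J) \<le> t"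
          by (rule Mset_le[symmetric]) (use J in auto)
        finally show "x$r \<le> t \<longleftrightarrow> Max ((\<lambda>j. E$r$j + x$j) ` J) \<le> t" .
      qed
    qed
  qed
  moreover have "tspan (col E ` J) \<subseteq> colspace E"
    unfolding colspace_def by (rule tspan_mono) auto
  ultimately have eq: "tspan (col E ` J) = colspace E" by blast
  have colin: "col E ` J \<subseteq> colspace E"
  proof
    fix g assume "g \<in> col E ` J"
    then obtain j where g: "g = col E j" by blast
    have "tmv E (col E j) = col E j" unfolding vec_eq_iff tmv_nth col_nth
      by (intro allI) (rule idem_eq[OF idem, symmetric])
    then show "g \<in> colspace E" unfolding g colspace_fix[OF idem] by simp
  qed
  have "trank E \<le> card (col E ` J)"
    unfolding trank_def
    by (rule Least_le, rule exI[of _ "col E ` J"]) (use eq colin in simp)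
  also have "\<dots> \<le> card J" by (rule card_image_le) simp
  also have "\<dots> < CARD('n)" unfolding J_def by (simp add: card_Diff_singleton card_gt_0_iff)
  finally show False using rk by simp
qed

lemma fix_mem: "x \<in> {x. tmv E x = x} \<longleftrightarrow> tmv E x = x" by simp

lemma interior_pres:
  assumes EA: "tmult E A = A" and BA: "tmult B A = E"
    and x: "x \<in> interior {x. tmv E x = x}"
  shows "tmv A x \<in> interior {x. tmv E x = x}"
proof -
  define F where "F = {x. tmv E x = x}"
  have inj: "inj_on (tmv A) (interior F)"
  proof (rule inj_on_inverseI)
    fix y assume "y \<in> interior F"
    then have "tmv E y = y" using interior_subset unfolding F_def by blast
    then show "tmv B (tmv A y) = y" by (simp add: tmv_assoc BA)
  qed
  have op: "open (tmv A ` interior F)"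
    by (rule invariance_of_domain[OF tmv_cont open_interior inj])
  have sub: "tmv A ` interior F \<subseteq> F"
  proof
    fix z assume "z \<in> tmv A ` interior F"
    then obtain y where z: "z = tmv A y" by blast
    have "tmv E z = z" unfolding z by (simp add: tmv_assoc EA)
    then show "z \<in> F" unfolding F_def by simp
  qed
  have "tmv A ` interior F \<subseteq> interior F" by (rule interior_maximal[OF sub op])
  then show ?thesis using x unfolding F_def by blast
qed

lemma frontier_fix: "frontier {x. tmv E x = x} = {x. tmv E x = x} - interior {x. tmv E x = x}"
  unfolding frontier_def by (simp add: closure_closed[OF fix_closed])

lemma frontier_pres:
  assumes EA: "tmult E A = A" and EB: "tmult E B = B" and BA: "tmult B A = E" and AB: "tmult A B = E"
    and x: "x \<in> frontier {x. tmv E x = x}"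
  shows "tmv A x \<in> frontier {x. tmv E x = x}"
proof -
  have xF: "tmv E x = x" and xi: "x \<notin> interior {x. tmv E x = x}" using x unfolding frontier_fix by auto
  have "tmv E (tmv A x) = tmv A x" by (simp add: tmv_assoc EA)
  moreover have "tmv A x \<notin> interior {x. tmv E x = x}"
  proof
    assume "tmv A x \<in> interior {x. tmv E x = x}"
    from interior_pres[OF EB AB this] have "tmv B (tmv A x) \<in> interior {x. tmv E x = x}" .
    then have "x \<in> interior {x. tmv E x = x}" by (simp add: tmv_assoc BA xF)
    then show False using xi by blast
  qed
  ultimately show ?thesis unfolding frontier_fix by blast
qed

lemma outside_frontier:
  fixes E :: "real^'n::finite^'n"
  assumes idem: "tmult E E = E" and diag: "\<And>i. E$i$i = 0" and x: "tmv E x \<noteq> x"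
  shows "tmv E x \<in> frontier {x. tmv E x = x}"
proof -
  define y where "y = tmv E x"
  have yF: "tmv E y = y" unfolding y_def by (simp add: tmv_assoc idem)
  have ge: "x$k \<le> y$k" for k
  proof -
    have "E$k$k + x$k \<le> y$k" unfolding y_def tmv_nth by (rule Mr_ge)
    then show ?thesis using diag[of k] by simp
  qed
  obtain i where "y$i \<noteq> x$i" using x unfolding y_def[symmetric] vec_eq_iff by blast
  then have lt: "x$i < y$i" using ge[of i] by simp
  obtain j where j: "y$i = E$i$j + x$j" using Mr_ex[of "\<lambda>k. E$i$k + x$k"] unfolding y_def tmv_nth by blast
  have ji: "j \<noteq> i" using j lt diag[of i] by auto
  have "E$i$j + y$j \<le> y$i"
  proof -
    have "E$i$j + y$j \<le> tmv E y $ i" unfolding tmv_nth by (rule Mr_ge)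
    then show ?thesis using yF by simp
  qed
  then have tight: "y$i = E$i$j + y$j" using j ge[of j] by linarith
  have notint: "y \<notin> interior {x. tmv E x = x}"
  proof
    assume "y \<in> interior {x. tmv E x = x}"
    then obtain e where e: "e > 0" "ball y e \<subseteq> {x. tmv E x = x}" unfolding mem_interior by blast
    define z where "z = y - (e/2) *\<^sub>R axis i (1::real)"
    have "dist y z = e/2" unfolding z_def dist_norm using e by simp
    then have "z \<in> ball y e" using e by simp
    then have zF: "tmv E z = z" using e by blast
    have zi: "z$i = y$i - e/2" and zj: "z$j = y$j" unfolding z_def using ji by (auto simp: axis_def)
    have "E$i$j + z$j \<le> tmv E z $ i" unfolding tmv_nth by (rule Mr_ge)
    then have "E$i$j + z$j \<le> z$i" using zF by simp
    then show False using zi zj tight e by linarith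
  qed
  have yF': "y \<in> {x. tmv E x = x}" using yF by simp
  have "y \<in> frontier {x. tmv E x = x}" unfolding frontier_fix by (rule DiffI[OF yF' notint])
  then show ?thesis unfolding y_def .
qed

lemma bij_fix:
  assumes EA: "tmult E A = A" and EB: "tmult E B = B" and BA: "tmult B A = E" and AB: "tmult A B = E"
  shows "bij_betw (tmv A) {x. tmv E x = x} {x. tmv E x = x}"
proof (rule bij_betw_byWitness[where f'="tmv B"])
  show "\<forall>a\<in>{x. tmv E x = x}. tmv B (tmv A a) = a" by (simp add: tmv_assoc BA)
  show "\<forall>a\<in>{x. tmv E x = x}. tmv A (tmv B a) = a" by (simp add: tmv_assoc AB)
  show "tmv A ` {x. tmv E x = x} \<subseteq> {x. tmv E x = x}" by (auto simp: tmv_assoc EA)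
  show "tmv B ` {x. tmv E x = x} \<subseteq> {x. tmv E x = x}" by (auto simp: tmv_assoc EB)
qed

lemma max_add_le: "max (a::real) b + c \<le> t \<longleftrightarrow> a + c \<le> t \<and> b + c \<le> t" by auto

lemma tvm_vmax: "tvm (vmax x y) A = vmax (tvm x A) (tvm y A)"
  unfolding vec_eq_iff
  by (auto intro!: eq_by_le simp: tvm_def vmax_def Mr_le max_add_le)

lemma tvm_vshift: "tvm (vshift c x) A = vshift c (tvm x A)"
  unfolding vec_eq_iff
  by (auto intro!: eq_by_le simp: tvm_def vshift_def Mr_le Mr_le2 add.assoc)

lemma tmult_transpose: "tmult (transpose X) (transpose Y) = transpose (tmult Y X)"
  unfolding vec_eq_iff by (simp add: transpose_def tmult_def add.commute)

lemma tvm_transpose: "tvm x A = tmv (transpose A) x"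
  unfolding vec_eq_iff by (simp add: transpose_def tmv_def tvm_def add.commute)

lemma rowspace_transpose: "rowspace E = colspace (transpose E)"
proof -
  have "Defs.row E = col (transpose E)"
    by (rule ext) (simp add: Defs.row_def col_def transpose_def)
  then show ?thesis unfolding rowspace_def colspace_def by simp
qed


theorem lemma7p2:
  fixes E A :: "real^'n::finite^'n"
  assumes "tidempotent E"
    and "trank E = CARD('n)"
    and "greenH A E"
  shows "(\<forall>x \<in> interior (colspace E). tmv A x \<in> interior (colspace E))
    \<and> (\<forall>x \<in> frontier (colspace E). tmv A x \<in> frontier (colspace E))
    \<and> (\<forall>x. x \<notin> colspace E \<longrightarrow> tmv A x \<in> frontier (colspace E))
    \<and> ft_module_automorphism (\<lambda>x. tvm x A) (rowspace E)
    \<and> (\<forall>x \<in> interior (rowspace E). tvm x A \<in> interior (rowspace E))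
    \<and> (\<forall>x \<in> frontier (rowspace E). tvm x A \<in> frontier (rowspace E))"
proof -
  have idem: "tmult E E = E" using assms(1) unfolding tidempotent_def .
  have diag: "\<And>i. E$i$i = 0" by (rule diag_zero[OF idem assms(2)])
  have gRL: "greenR A E" "greenL A E" using assms(3) unfolding greenH_def by auto
  have gR: "insert A (range (tmult A)) = insert E (range (tmult E))"
    using gRL(1) unfolding greenR_def .
  have gL: "insert A (range (\<lambda>s. tmult s A)) = insert E (range (\<lambda>s. tmult s E))"
    using gRL(2) unfolding greenL_def .
  have EA: "tmult E A = A"
  proof -
    have "A \<in> insert E (range (tmult E))" using insertI1[of A "range (tmult A)"] unfolding gR .
    then consider "A = E" | C where "A = tmult E C" by blast
    then show ?thesis
    proof cases
      case 1 then show ?thesis using idem by simp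
    next
      case 2 then show ?thesis by (simp add: tmult_assoc idem)
    qed
  qed
  have AE: "tmult A E = A"
  proof -
    have "A \<in> insert E (range (\<lambda>s. tmult s E))" using insertI1[of A "range (\<lambda>s. tmult s A)"] unfolding gL .
    then consider "A = E" | C where "A = tmult C E" by blast
    then show ?thesis
    proof cases
      case 1 then show ?thesis using idem by simp
    next
      case 2 then show ?thesis by (simp add: tmult_assoc[symmetric] idem)
    qed
  qed
  obtain B1 where B1: "tmult A B1 = E"
  proof -
    have "E \<in> insert A (range (tmult A))" using insertI1[of E "range (tmult E)"] unfolding gR[symmetric] .
    then consider "E = A" | C where "E = tmult A C" by blast
    then show ?thesis
    proof cases
      case 1 then show ?thesis using that[of E] AE by simp
    next
      case 2 then show ?thesis using that by simp
    qed
  qed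
  obtain B2 where B2: "tmult B2 A = E"
  proof -
    have "E \<in> insert A (range (\<lambda>s. tmult s A))" using insertI1[of E "range (\<lambda>s. tmult s E)"] unfolding gL[symmetric] .
    then consider "E = A" | C where "E = tmult C A" by blast
    then show ?thesis
    proof cases
      case 1 then show ?thesis using that[of E] EA by simp
    next
      case 2 then show ?thesis using that by simp
    qed
  qed
  define B where "B = tmult B2 E"
  have B2E: "B = tmult E B1"
  proof -
    have "tmult B2 E = tmult B2 (tmult A B1)" by (simp add: B1)
    also have "\<dots> = tmult E B1" by (simp add: tmult_assoc B2)
    finally show ?thesis unfolding B_def .
  qed
  have BA: "tmult B A = E" unfolding B_def by (simp add: tmult_assoc[symmetric] EA B2)
  have AB: "tmult A B = E" unfolding B2E by (simp add: tmult_assoc AE B1)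
  have EB: "tmult E B = B" unfolding B2E by (simp add: tmult_assoc idem)
  have BE: "tmult B E = B" unfolding B_def by (simp add: tmult_assoc[symmetric] idem)
  have CF: "colspace E = {x. tmv E x = x}" by (rule colspace_fix[OF idem])
  have P1: "\<forall>x \<in> interior (colspace E). tmv A x \<in> interior (colspace E)"
    unfolding CF by (intro ballI interior_pres[OF EA BA])
  have P2: "\<forall>x \<in> frontier (colspace E). tmv A x \<in> frontier (colspace E)"
    unfolding CF by (intro ballI frontier_pres[OF EA EB BA AB])
  have P3: "\<forall>x. x \<notin> colspace E \<longrightarrow> tmv A x \<in> frontier (colspace E)"
  proof (intro allI impI)
    fix x assume "x \<notin> colspace E"
    then have "tmv E x \<noteq> x" unfolding CF by simp
    then have "tmv E x \<in> frontier {x. tmv E x = x}" by (rule outside_frontier[OF idem diag])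
    then have "tmv A (tmv E x) \<in> frontier {x. tmv E x = x}" by (rule frontier_pres[OF EA EB BA AB])
    then show "tmv A x \<in> frontier (colspace E)" unfolding CF by (simp add: tmv_assoc AE)
  qed
  define E' A' B' where "E' = transpose E" and "A' = transpose A" and "B' = transpose B"
  have idem': "tmult E' E' = E'" unfolding E'_def by (simp add: tmult_transpose idem)
  have EA': "tmult E' A' = A'" unfolding E'_def A'_def by (simp add: tmult_transpose AE)
  have EB': "tmult E' B' = B'" unfolding E'_def B'_def by (simp add: tmult_transpose BE)
  have BA': "tmult B' A' = E'" unfolding E'_def A'_def B'_def by (simp add: tmult_transpose AB)
  have AB': "tmult A' B' = E'" unfolding E'_def A'_def B'_def by (simp add: tmult_transpose BA)
  have RF: "rowspace E = {x. tmv E' x = x}"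
    unfolding rowspace_transpose E'_def by (rule colspace_fix[OF idem'[unfolded E'_def]])
  have tv: "(\<lambda>x. tvm x A) = tmv A'" unfolding A'_def by (rule ext) (simp add: tvm_transpose)
  have P4: "ft_module_automorphism (\<lambda>x. tvm x A) (rowspace E)"
    unfolding ft_module_automorphism_def
  proof (intro conjI ballI allI)
    show "bij_betw (\<lambda>x. tvm x A) (rowspace E) (rowspace E)"
      unfolding tv RF by (rule bij_fix[OF EA' EB' BA' AB'])
  qed (simp_all add: tvm_vmax tvm_vshift)
  have P5: "\<forall>x \<in> interior (rowspace E). tvm x A \<in> interior (rowspace E)"
    unfolding RF tvm_transpose A'_def[symmetric] by (intro ballI interior_pres[OF EA' BA'])
  have P6: "\<forall>x \<in> frontier (rowspace E). tvm x A \<in> frontier (rowspace E)"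
    unfolding RF tvm_transpose A'_def[symmetric] by (intro ballI frontier_pres[OF EA' EB' BA' AB'])
  show ?thesis by (intro conjI P1 P2 P3 P4 P5 P6)
qed

end
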